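(* Let $n\geq 1$, let $\mathcal{X}=\{-1,1\}^n$, and let $\mathcal{P}\subseteq[0,1]$ be a Lebesgue measurable set with Lebesgue measure $\mu(\mathcal{P})>0$. Let $\mathcal{K}$ be the set of admissible controllers, i.e. maps $K:\mathcal{X}\to\mathbb{R}^n$, $X=(X_0,\dots,X_{n-1})\mapsto (K_0(X),\dots,K_{n-1}(X))$, such that for each $k\in\{0,\dots,n-1\}$ the value $K_k(X)$ depends only on $X_0,\dots,X_{k-1}$ (causality; in particular $K_0$ is constant), and $|K_k(X)|\leq 1$ for all $X$ and $k$. For $K\in\mathcal{K}$ and $p\in[0,1]$ let \[ ELG_K(p)\doteq\frac{1}{n}\sum_{X\in\mathcal{X}}P_p(X)\sum_{k=0}^{n-1}\log\bigl(1+K_k(X)X_k\bigr),\qquad P_p(X)\doteq p^{n_h(X)}(1-p)^{n-n_h(X)}, \] where $n_h(X)=\#\{i: X_i=1\}$, with the conventions $\log 0=-\infty$ and $0\cdot(-\infty)=0$. Then the function \[ f(K)\doteq\int_{p\in\mathcal{P}}ELG_K(p)\,dp,\qquad K\in\mathcal{K}, \] has a unique maximizer $K^*\in\mathcal{K}$, given, for each stage $k\in\{0,\dots,n-1\}$ and each sample path $\bar X\in\mathcal{X}$, by \[ K_k^*(\bar X)=\frac{\int_{p\in\mathcal{P}}p^{q_k}(1-p)^{k-q_k}(2p-1)\,dp}{\int_{p\in\mathcal{P}}p^{q_k}(1-p)^{k-q_k}\,dp}, \] where $q_k=q_k(\bar X)=\#\{i\in\{0,\dots,k-1\}:\bar X_i=1\}$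 (so $q_0=0$).
   Context: Interpretation: a bettor flips a coin $n$ times with probability of heads $p$ and even-money payoff; $X_k=1$ means heads and $X_k=-1$ tails at flip $k$. Starting from wealth $V_0>0$, the bet at stage $k$ is $u_k=K_k(X)V_k$ (positive means a bet on heads, negative on tails), and wealth evolves as $V_{k+1}=(1+K_k(X)X_k)V_k$; thus $ELG_K(p)=\frac1n\mathbb{E}\log(V_n/V_0)$. The set $\mathcal{P}$ represents the uncertainty in the probability of heads. *)

theory Defs
  imports "HOL-Analysis.Analysis"
begin

definition paths :: "nat \<Rightarrow> real list set" where
  "paths n = {X. length X = n \<and> set X \<subseteq> {-1, 1}}"

text \<open>Controllers: K X k is the k-th component K_k(X).  Admissible: causal and bounded by 1
  (conditions only on sample paths and stages k < n).\<close>
definition admissible :: "nat \<Rightarrow> (real list \<Rightarrow> nat \<Rightarrow> real) set" where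
  "admissible n = {K.
     (\<forall>X\<in>paths n. \<forall>Y\<in>paths n. \<forall>k<n. take k X = take k Y \<longrightarrow> K X k = K Y k) \<and>
     (\<forall>X\<in>paths n. \<forall>k<n. \<bar>K X k\<bar> \<le> 1)}"

definition nheads :: "real list \<Rightarrow> nat" where
  "nheads X = length (filter (\<lambda>x. x = 1) X)"

definition Pp :: "nat \<Rightarrow> real \<Rightarrow> real list \<Rightarrow> real" where
  "Pp n p X = p ^ nheads X * (1 - p) ^ (n - nheads X)"

text \<open>Extended logarithm with log 0 = -\<infinity> (arguments are always \<ge> 0 here).\<close>
definition elog :: "real \<Rightarrow> ereal" where
  "elog x = (if x \<le> 0 then -\<infinity> else ereal (ln x))"

text \<open>Expected log growth; ereal multiplication satisfies 0 * (-\<infinity>) = 0.\<close>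
definition ELG :: "nat \<Rightarrow> (real list \<Rightarrow> nat \<Rightarrow> real) \<Rightarrow> real \<Rightarrow> ereal" where
  "ELG n K p = ereal (1 / real n) *
     (\<Sum>X\<in>paths n. ereal (Pp n p X) * (\<Sum>k<n. elog (1 + K X k * X ! k)))"

definition ereal_set_integral :: "real set \<Rightarrow> (real \<Rightarrow> ereal) \<Rightarrow> ereal" where
  "ereal_set_integral P g =
     enn2ereal (\<integral>\<^sup>+ p\<in>P. e2ennreal (g p) \<partial>lebesgue)
     - enn2ereal (\<integral>\<^sup>+ p\<in>P. e2ennreal (- g p) \<partial>lebesgue)"

definition fobj :: "nat \<Rightarrow> real set \<Rightarrow> (real list \<Rightarrow> nat \<Rightarrow> real) \<Rightarrow> ereal" where
  "fobj n P K = ereal_set_integral P (ELG n K)"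

definition Kstar :: "real set \<Rightarrow> real list \<Rightarrow> nat \<Rightarrow> real" where
  "Kstar P X k =
     (let q = nheads (take k X) in
       (LINT p:P|lebesgue. p ^ q * (1 - p) ^ (k - q) * (2 * p - 1))
       / (LINT p:P|lebesgue. p ^ q * (1 - p) ^ (k - q)))"

end

theory Submission
  imports Defs
begin


lemma finite_paths: "finite (paths n)"
proof -
  have "paths n \<subseteq> {xs. set xs \<subseteq> {-1,1::real} \<and> length xs = n}" by (auto simp: paths_def)
  thus ?thesis using finite_lists_length_eq[of "{-1,1::real}" n] finite_subset by blast
qed

lemma paths_Suc: "paths (Suc k) = (\<lambda>(Y,x). Y @ [x]) ` (paths k \<times> {-1,1})"
proof (rule set_eqI, rule iffI)
  fix Z assume Z: "Z \<in> paths (Suc k)"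
  then have "Z \<noteq> []" by (auto simp: paths_def)
  then have "Z = butlast Z @ [last Z]" by simp
  moreover have "butlast Z \<in> paths k" using Z by (auto simp: paths_def dest: in_set_butlastD)
  moreover have "last Z \<in> {-1,1}" using Z \<open>Z \<noteq> []\<close> last_in_set[of Z] unfolding paths_def by blast
  ultimately show "Z \<in> (\<lambda>(Y,x). Y @ [x]) ` (paths k \<times> {-1,1})" by force
qed (auto simp: paths_def)

lemma nheads_snoc: "nheads (Y @ [x]) = nheads Y + (if x = 1 then 1 else 0)"
  by (simp add: nheads_def)

lemma nheads_le: "nheads Y \<le> length Y"
  by (simp add: nheads_def)

lemma sum_snoc:
  "(\<Sum>Z\<in>paths (Suc k). Pp (Suc k) p Z * F Z) =
   (\<Sum>Y\<in>paths k. Pp k p Y * (p * F (Y @ [1]) + (1 - p) * F (Y @ [-1])))"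
proof -
  have inj: "inj_on (\<lambda>(Y,x). Y @ [x]) (paths k \<times> {-1,1::real})"
    by (auto simp: inj_on_def)
  have "(\<Sum>Z\<in>paths (Suc k). Pp (Suc k) p Z * F Z) =
        (\<Sum>(Y,x)\<in>paths k \<times> {-1,1}. Pp (Suc k) p (Y @ [x]) * F (Y @ [x]))"
    unfolding paths_Suc by (subst sum.reindex[OF inj]) (simp add: case_prod_beta)
  also have "\<dots> = (\<Sum>Y\<in>paths k. \<Sum>x\<in>{-1,1}. Pp (Suc k) p (Y @ [x]) * F (Y @ [x]))"
    by (subst sum.cartesian_product[symmetric]) simp
  also have "\<dots> = (\<Sum>Y\<in>paths k. Pp k p Y * (p * F (Y @ [1]) + (1 - p) * F (Y @ [-1])))"
  proof (rule sum.cong[OF refl])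
    fix Y assume Y: "Y \<in> paths k"
    have l: "length Y = k" using Y by (simp add: paths_def)
    have le: "nheads Y \<le> k" using nheads_le[of Y] l by simp
    have e1: "Suc k - (nheads Y + 1) = k - nheads Y" using le by simp
    have e2: "Suc k - nheads Y = Suc (k - nheads Y)" using le by simp
    show "(\<Sum>x\<in>{-1,1}. Pp (Suc k) p (Y @ [x]) * F (Y @ [x])) =
          Pp k p Y * (p * F (Y @ [1]) + (1 - p) * F (Y @ [-1]))"
      by (simp add: Pp_def nheads_snoc e1 e2 algebra_simps)
  qed
  finally show ?thesis .
qed

lemma sum_Pp_one: "(\<Sum>Y\<in>paths k. Pp k p Y) = 1"
proof (induction k)
  case 0
  have "paths 0 = {[]}" by (auto simp: paths_def)
  then show ?case by (simp add: Pp_def nheads_def)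
next
  case (Suc k)
  have "(\<Sum>Y\<in>paths (Suc k). Pp (Suc k) p Y) = (\<Sum>Y\<in>paths (Suc k). Pp (Suc k) p Y * 1)" by simp
  also have "\<dots> = (\<Sum>Y\<in>paths k. Pp k p Y)" by (subst sum_snoc) simp
  finally show ?case using Suc by simp
qed

lemma sum_take:
  assumes "m \<le> n"
  shows "(\<Sum>X\<in>paths n. Pp n p X * F (take m X)) = (\<Sum>Y\<in>paths m. Pp m p Y * F Y)"
  using assms
proof (induction n rule: dec_induct)
  case base
  then show ?case by (intro sum.cong) (auto simp: paths_def)
next
  case (step n)
  have "(\<Sum>X\<in>paths (Suc n). Pp (Suc n) p X * F (take m X))
      = (\<Sum>Y\<in>paths n. Pp n p Y * (p * F (take m (Y @ [1])) + (1 - p) * F (take m (Y @ [-1]))))"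
    by (rule sum_snoc)
  also have "\<dots> = (\<Sum>Y\<in>paths n. Pp n p Y * F (take m Y))"
    by (intro sum.cong refl) (use step in \<open>auto simp: paths_def algebra_simps\<close>)
  finally show ?case using step by simp
qed



lemma bound_cont:
  fixes f :: "real \<Rightarrow> real"
  assumes "continuous_on {0..1} f"
  shows "\<exists>B. \<forall>x\<in>{0..1}. \<bar>f x\<bar> \<le> B"
proof -
  have "continuous_on {0..1} (\<lambda>x. \<bar>f x\<bar>)" using assms by (intro continuous_intros)
  from continuous_attains_sup[OF compact_Icc _ this] show ?thesis by auto
qed

lemma finite_P:
  assumes "P \<in> sets lebesgue" "P \<subseteq> {0..1::real}"
  shows "emeasure lebesgue P < \<infinity>"
proof -
  have "emeasure lebesgue P \<le> emeasure lebesgue {0..1::real}"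
    using assms by (intro emeasure_mono) auto
  also have "\<dots> = 1" by simp
  finally show ?thesis by (simp add: order_le_less_trans)
qed

lemma intM:
  fixes f :: "real \<Rightarrow> real"
  assumes P: "P \<in> sets lebesgue" "P \<subseteq> {0..1}" and f: "continuous_on {0..1} f"
  shows "integrable (lebesgue_on P) f"
proof -
  obtain B where B: "\<forall>x\<in>{0..1}. \<bar>f x\<bar> \<le> B" using bound_cont[OF f] by blast
  have sp: "space (lebesgue_on P) = P" by (simp add: space_restrict_space)
  have m: "f \<in> borel_measurable (lebesgue_on P)"
    by (rule continuous_imp_measurable_on_sets_lebesgue[OF continuous_on_subset[OF f P(2)] P(1)])
  show ?thesis
  proof (rule integrableI_bounded_set[where A=P and B=B])
    show "P \<in> sets (lebesgue_on P)" using sets.top[of "lebesgue_on P"] sp by simp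
    show "emeasure (lebesgue_on P) P < \<infinity>"
      using finite_P[OF P] by (simp add: emeasure_restrict_space P)
    show "AE x in lebesgue_on P. x \<in> P \<longrightarrow> norm (f x) \<le> B"
      using B P(2) by (intro AE_I2) auto
    show "AE x in lebesgue_on P. x \<notin> P \<longrightarrow> f x = 0"
      by (intro AE_I2) (simp add: sp)
  qed (rule m)
qed

lemma LINT_eq:
  fixes f :: "real \<Rightarrow> real"
  assumes "P \<in> sets lebesgue"
  shows "(LINT p:P|lebesgue. f p) = integral\<^sup>L (lebesgue_on P) f"
  unfolding set_lebesgue_integral_def by (rule integral_restrict_space[symmetric]) (simp add: assms)



definition ext :: "nat \<Rightarrow> real list \<Rightarrow> real list" where
  "ext n Y = Y @ replicate (n - length Y) 1"

definition wA :: "real set \<Rightarrow> nat \<Rightarrow> real list \<Rightarrow> real" where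
  "wA P k Y = integral\<^sup>L (lebesgue_on P) (\<lambda>p. Pp k p Y * p)"

definition wB :: "real set \<Rightarrow> nat \<Rightarrow> real list \<Rightarrow> real" where
  "wB P k Y = integral\<^sup>L (lebesgue_on P) (\<lambda>p. Pp k p Y * (1 - p))"

definition Phi :: "real set \<Rightarrow> nat \<Rightarrow> real list \<Rightarrow> real \<Rightarrow> real" where
  "Phi P k Y a = wA P k Y * ln (1 + a) + wB P k Y * ln (1 - a)"

definition V :: "nat \<Rightarrow> real set \<Rightarrow> (real list \<Rightarrow> nat \<Rightarrow> real) \<Rightarrow> real" where
  "V n P K = (1 / real n) * (\<Sum>k<n. \<Sum>Y\<in>paths k. Phi P k Y (K (ext n Y) k))"

definition hK :: "nat \<Rightarrow> (real list \<Rightarrow> nat \<Rightarrow> real) \<Rightarrow> real \<Rightarrow> real" where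
  "hK n K p = (1 / real n) * (\<Sum>X\<in>paths n. Pp n p X * (\<Sum>k<n. ln (1 + K X k * X ! k)))"

lemma ext_paths: "Y \<in> paths k \<Longrightarrow> k \<le> n \<Longrightarrow> ext n Y \<in> paths n"
  by (auto simp: ext_def paths_def)

lemma take_ext: "Y \<in> paths k \<Longrightarrow> take k (ext n Y) = Y"
  by (auto simp: ext_def paths_def)

lemma nth_ext: "Y \<in> paths k \<Longrightarrow> k < n \<Longrightarrow> ext n Y ! k = 1"
  by (auto simp: ext_def paths_def nth_append)

lemma take_paths: "X \<in> paths n \<Longrightarrow> k \<le> n \<Longrightarrow> take k X \<in> paths k"
  by (auto simp: paths_def dest: in_set_takeD)

lemma causal:
  assumes "K \<in> admissible n" "X \<in> paths n" "k < n"
  shows "K X k = K (ext n (take k X)) k"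
proof -
  have "take k X \<in> paths k" using take_paths assms by simp
  then have "ext n (take k X) \<in> paths n" "take k (ext n (take k X)) = take k X"
    using ext_paths take_ext assms by auto
  moreover have "\<forall>X\<in>paths n. \<forall>Y\<in>paths n. \<forall>k<n. take k X = take k Y \<longrightarrow> K X k = K Y k"
    using assms(1) unfolding admissible_def by blast
  ultimately show ?thesis using assms(2,3) by metis
qed

lemma stage:
  assumes K: "K \<in> admissible n" and k: "k < n"
  shows "(\<Sum>X\<in>paths n. Pp n p X * ln (1 + K X k * X ! k)) =
    (\<Sum>Y\<in>paths k. Pp k p Y * (p * ln (1 + K (ext n Y) k) + (1 - p) * ln (1 - K (ext n Y) k)))"
proof -
  define G where "G Z = ln (1 + K (ext n (take k Z)) k * Z ! k)" for Z
  have "(\<Sum>X\<in>paths n. Pp n p X * ln (1 + K X k * X ! k)) =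
        (\<Sum>X\<in>paths n. Pp n p X * G (take (Suc k) X))"
  proof (rule sum.cong[OF refl])
    fix X assume X: "X \<in> paths n"
    show "Pp n p X * ln (1 + K X k * X ! k) = Pp n p X * G (take (Suc k) X)"
      using causal[OF K X k] k by (simp add: G_def)
  qed
  also have "\<dots> = (\<Sum>Z\<in>paths (Suc k). Pp (Suc k) p Z * G Z)"
    using k by (intro sum_take) simp
  also have "\<dots> = (\<Sum>Y\<in>paths k. Pp k p Y * (p * G (Y @ [1]) + (1 - p) * G (Y @ [-1])))"
    by (rule sum_snoc)
  also have "\<dots> = (\<Sum>Y\<in>paths k. Pp k p Y * (p * ln (1 + K (ext n Y) k) + (1 - p) * ln (1 - K (ext n Y) k)))"
    by (intro sum.cong refl) (auto simp: G_def paths_def nth_append)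
  finally show ?thesis .
qed

lemma hK_expand:
  assumes K: "K \<in> admissible n"
  shows "hK n K p = (1 / real n) * (\<Sum>k<n. \<Sum>Y\<in>paths k.
     Pp k p Y * (p * ln (1 + K (ext n Y) k) + (1 - p) * ln (1 - K (ext n Y) k)))"
proof -
  have "(\<Sum>X\<in>paths n. Pp n p X * (\<Sum>k<n. ln (1 + K X k * X ! k)))
      = (\<Sum>k<n. \<Sum>X\<in>paths n. Pp n p X * ln (1 + K X k * X ! k))"
    by (subst sum.swap) (simp add: sum_distrib_left)
  also have "\<dots> = (\<Sum>k<n. \<Sum>Y\<in>paths k.
     Pp k p Y * (p * ln (1 + K (ext n Y) k) + (1 - p) * ln (1 - K (ext n Y) k)))"
    using stage[OF K] by simp
  finally show ?thesis by (simp add: hK_def)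
qed

lemma cont_Pp: "continuous_on S (\<lambda>p. Pp k p Y * (p * a + (1 - p) * b))"
  unfolding Pp_def by (intro continuous_intros)

lemma integral_hK:
  assumes P: "P \<in> sets lebesgue" "P \<subseteq> {0..1}" and K: "K \<in> admissible n"
  shows "integral\<^sup>L (lebesgue_on P) (hK n K) = V n P K"
proof -
  have i1: "integrable (lebesgue_on P) (\<lambda>p. Pp k p Y * p)" for k Y
    by (rule intM[OF P]) (unfold Pp_def, intro continuous_intros)
  have i2: "integrable (lebesgue_on P) (\<lambda>p. Pp k p Y * (1 - p))" for k Y
    by (rule intM[OF P]) (unfold Pp_def, intro continuous_intros)
  have e: "(\<lambda>p. Pp k p Y * (p * a + (1 - p) * b)) = (\<lambda>p. (Pp k p Y * p) * a + (Pp k p Y * (1 - p)) * b)"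
    for k Y a b by (auto simp: algebra_simps)
  have trm: "integral\<^sup>L (lebesgue_on P) (\<lambda>p. Pp k p Y * (p * a + (1 - p) * b)) = wA P k Y * a + wB P k Y * b"
    for k Y a b
    unfolding e wA_def wB_def using i1 i2 by simp
  have it: "integrable (lebesgue_on P) (\<lambda>p. Pp k p Y * (p * a + (1 - p) * b))" for k Y a b
    using intM[OF P] cont_Pp by blast
  define f where "f k Y p = Pp k p Y * (p * ln (1 + K (ext n Y) k) + (1 - p) * ln (1 - K (ext n Y) k))" for k Y p
  have itf: "integrable (lebesgue_on P) (f k Y)" for k Y unfolding f_def by (rule it)
  have its: "integrable (lebesgue_on P) (\<lambda>p. \<Sum>Y\<in>paths k. f k Y p)" for k
    using itf by (intro Bochner_Integration.integrable_sum) auto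
  have "integral\<^sup>L (lebesgue_on P) (hK n K) = integral\<^sup>L (lebesgue_on P) (\<lambda>p. (1 / real n) * (\<Sum>k<n. \<Sum>Y\<in>paths k. f k Y p))"
    unfolding hK_expand[OF K] f_def by simp
  also have "\<dots> = (1 / real n) * integral\<^sup>L (lebesgue_on P) (\<lambda>p. \<Sum>k<n. \<Sum>Y\<in>paths k. f k Y p)"
    by (rule integral_mult_right_zero)
  also have "\<dots> = (1 / real n) * (\<Sum>k<n. integral\<^sup>L (lebesgue_on P) (\<lambda>p. \<Sum>Y\<in>paths k. f k Y p))"
    using its by (subst Bochner_Integration.integral_sum) auto
  also have "\<dots> = (1 / real n) * (\<Sum>k<n. \<Sum>Y\<in>paths k. integral\<^sup>L (lebesgue_on P) (f k Y))"
    using itf by (subst Bochner_Integration.integral_sum) auto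
  also have "\<dots> = V n P K"
    unfolding V_def Phi_def f_def trm by simp
  finally show ?thesis .
qed



lemma Pprime_pos:
  assumes P: "P \<in> sets lebesgue" "emeasure lebesgue P > 0"
  shows "emeasure lebesgue (P - {0,1::real}) > 0"
proof -
  have "{0,1::real} \<in> null_sets lebesgue" by simp
  then show ?thesis using emeasure_Diff_null_set[of "{0,1::real}" lebesgue P] P by simp
qed

lemma pos_int:
  fixes f :: "real \<Rightarrow> real"
  assumes P: "P \<in> sets lebesgue" "P \<subseteq> {0..1}" "emeasure lebesgue P > 0"
    and f: "continuous_on {0..1} f" "\<And>x. x \<in> {0..1} \<Longrightarrow> 0 \<le> f x"
    "\<And>x. x \<in> {0<..<1} \<Longrightarrow> 0 < f x"
  shows "integral\<^sup>L (lebesgue_on P) f > 0"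
proof -
  have I: "integrable (lebesgue_on P) f" by (rule intM[OF P(1,2) f(1)])
  have sp: "space (lebesgue_on P) = P" by (simp add: space_restrict_space)
  have nn: "AE x in lebesgue_on P. 0 \<le> f x"
    using P(2) f(2) by (intro AE_I2) (auto simp: sp)
  have ge: "integral\<^sup>L (lebesgue_on P) f \<ge> 0" using nn by (rule integral_nonneg_AE)
  show ?thesis
  proof (rule ccontr)
    assume "\<not> ?thesis"
    then have "integral\<^sup>L (lebesgue_on P) f = 0" using ge by simp
    then have "AE x in lebesgue_on P. f x = 0" using integral_nonneg_eq_0_iff_AE[OF I nn] by simp
    then have "AE x in lebesgue. x \<in> P \<longrightarrow> f x = 0"
      using AE_restrict_space_iff[of P lebesgue] P(1) by simp
    then have "AE x in lebesgue. x \<notin> P - {0,1}"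
    proof (rule AE_mp, intro AE_I2 impI)
      fix x assume h: "x \<in> P \<longrightarrow> f x = 0"
      show "x \<notin> P - {0,1}"
      proof
        assume x: "x \<in> P - {0,1}"
        then have "x \<in> {0<..<1}" using P(2) by force
        then have "f x > 0" by (rule f(3))
        then show False using h x by simp
      qed
    qed
    moreover have Nm: "P - {0,1} \<in> sets lebesgue" using P(1) by auto
    moreover have "{x \<in> space lebesgue. \<not> (x \<notin> P - {0,1})} = P - {0,1}" by auto
    ultimately have "emeasure lebesgue (P - {0,1}) = 0"
      using AE_iff_measurable[of "P - {0,1}" lebesgue "\<lambda>x. x \<notin> P - {0,1}"] by blast
    then show False using Pprime_pos[OF P(1,3)] by simp
  qed
qed

lemma wA_pos:
  assumes P: "P \<in> sets lebesgue" "P \<subseteq> {0..1}" "emeasure lebesgue P > 0"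
  shows "wA P k Y > 0"
  unfolding wA_def
  by (rule pos_int[OF P]) (auto simp: Pp_def intro!: continuous_intros)

lemma wB_pos:
  assumes P: "P \<in> sets lebesgue" "P \<subseteq> {0..1}" "emeasure lebesgue P > 0"
  shows "wB P k Y > 0"
  unfolding wB_def
  by (rule pos_int[OF P]) (auto simp: Pp_def intro!: continuous_intros)

lemma Kstar_eq:
  assumes P: "P \<in> sets lebesgue" "P \<subseteq> {0..1}"
  shows "Kstar P X k = (wA P k (take k X) - wB P k (take k X)) / (wA P k (take k X) + wB P k (take k X))"
proof -
  define Y where "Y = take k X"
  define q where "q = nheads Y"
  have pp: "Pp k p Y = p ^ q * (1 - p) ^ (k - q)" for p by (simp add: Pp_def q_def)
  have i1: "integrable (lebesgue_on P) (\<lambda>p. Pp k p Y * p)"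
    by (rule intM[OF P]) (unfold Pp_def, intro continuous_intros)
  have i2: "integrable (lebesgue_on P) (\<lambda>p. Pp k p Y * (1 - p))"
    by (rule intM[OF P]) (unfold Pp_def, intro continuous_intros)
  have e1: "(\<lambda>p. p ^ q * (1 - p) ^ (k - q) * (2 * p - 1)) = (\<lambda>p. Pp k p Y * p - Pp k p Y * (1 - p))"
    by (auto simp: pp algebra_simps)
  have e2: "(\<lambda>p. p ^ q * (1 - p) ^ (k - q)) = (\<lambda>p. Pp k p Y * p + Pp k p Y * (1 - p))"
    by (auto simp: pp algebra_simps)
  have "Kstar P X k = integral\<^sup>L (lebesgue_on P) (\<lambda>p. p ^ q * (1 - p) ^ (k - q) * (2 * p - 1))
       / integral\<^sup>L (lebesgue_on P) (\<lambda>p. p ^ q * (1 - p) ^ (k - q))"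
    unfolding Kstar_def Let_def q_def Y_def by (simp add: LINT_eq[OF P(1)])
  also have "\<dots> = (wA P k Y - wB P k Y) / (wA P k Y + wB P k Y)"
    unfolding e1 e2 wA_def wB_def using i1 i2 by simp
  finally show ?thesis unfolding Y_def .
qed

lemma ln_strict: "0 < x \<Longrightarrow> x \<noteq> 1 \<Longrightarrow> ln x < x - (1::real)"
proof -
  assume x: "0 < x" "x \<noteq> 1"
  have s: "0 < sqrt x" "sqrt x \<noteq> 1" using x by auto
  have "ln x = 2 * ln (sqrt x)" using x by (simp add: ln_sqrt)
  also have "\<dots> \<le> 2 * (sqrt x - 1)" using ln_le_minus_one[OF s(1)] by simp
  also have "\<dots> < x - 1"
  proof -
    have "0 < (sqrt x - 1)^2" using s by simp
    then show ?thesis using x by (simp add: power2_eq_square algebra_simps)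
  qed
  finally show ?thesis .
qed

lemma gibbs:
  fixes A B a :: real
  assumes A: "A > 0" and B: "B > 0" and a: "1 + a > 0" "1 - a > 0"
  defines "s \<equiv> (A - B) / (A + B)"
  shows "A * ln (1 + a) + B * ln (1 - a) \<le> A * ln (1 + s) + B * ln (1 - s)"
    and "A * ln (1 + a) + B * ln (1 - a) = A * ln (1 + s) + B * ln (1 - s) \<Longrightarrow> a = s"
proof -
  have s1: "1 + s = 2 * A / (A + B)" and s2: "1 - s = 2 * B / (A + B)"
    using A B by (simp_all add: s_def field_simps)
  have sp: "1 + s > 0" "1 - s > 0" using s1 s2 A B by simp_all
  define u where "u = (1 + a) / (1 + s)"
  define v where "v = (1 - a) / (1 - s)"
  have uv: "u > 0" "v > 0" using a sp by (simp_all add: u_def v_def)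
  have lu: "ln (1 + a) = ln u + ln (1 + s)" using a sp by (simp add: u_def ln_div)
  have lv: "ln (1 - a) = ln v + ln (1 - s)" using a sp by (simp add: v_def ln_div)
  have key: "A * (u - 1) + B * (v - 1) = 0"
    unfolding u_def v_def s1 s2 using A B by (simp add: field_simps)
  have D: "A * ln (1 + a) + B * ln (1 - a) - (A * ln (1 + s) + B * ln (1 - s)) = A * ln u + B * ln v"
    by (simp add: lu lv algebra_simps)
  have "A * ln u + B * ln v \<le> A * (u - 1) + B * (v - 1)"
    using ln_le_minus_one[OF uv(1)] ln_le_minus_one[OF uv(2)] A B
    by (intro add_mono mult_left_mono) auto
  then show "A * ln (1 + a) + B * ln (1 - a) \<le> A * ln (1 + s) + B * ln (1 - s)"
    using D key by linarith
  assume eq: "A * ln (1 + a) + B * ln (1 - a) = A * ln (1 + s) + B * ln (1 - s)"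
  show "a = s"
  proof (rule ccontr)
    assume "a \<noteq> s"
    then have "u \<noteq> 1" using sp by (simp add: u_def)
    then have "A * ln u < A * (u - 1)" using ln_strict[OF uv(1)] A by simp
    moreover have "B * ln v \<le> B * (v - 1)" using ln_le_minus_one[OF uv(2)] B by simp
    ultimately show False using D key eq by linarith
  qed
qed



definition good :: "nat \<Rightarrow> (real list \<Rightarrow> nat \<Rightarrow> real) \<Rightarrow> bool" where
  "good n K = (\<forall>X\<in>paths n. \<forall>k<n. 0 < 1 + K X k * X ! k)"

lemma enn2ereal_fin: "x < top \<Longrightarrow> enn2ereal x = ereal (enn2real x)"
  by (metis ennreal_enn2real enn2ereal_ennreal enn2real_nonneg)

lemma ELG_good:
  assumes "good n K"
  shows "ELG n K p = ereal (hK n K p)"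
proof -
  have "(\<Sum>k<n. elog (1 + K X k * X ! k)) = ereal (\<Sum>k<n. ln (1 + K X k * X ! k))" if X: "X \<in> paths n" for X
  proof -
    have "(\<Sum>k<n. elog (1 + K X k * X ! k)) = (\<Sum>k<n. ereal (ln (1 + K X k * X ! k)))"
    proof (rule sum.cong[OF refl])
      fix k assume "k \<in> {..<n}"
      then have "0 < 1 + K X k * X ! k" using assms X unfolding good_def by blast
      then show "elog (1 + K X k * X ! k) = ereal (ln (1 + K X k * X ! k))" by (simp add: elog_def)
    qed
    then show ?thesis by simp
  qed
  then have "(\<Sum>X\<in>paths n. ereal (Pp n p X) * (\<Sum>k<n. elog (1 + K X k * X ! k)))
     = (\<Sum>X\<in>paths n. ereal (Pp n p X * (\<Sum>k<n. ln (1 + K X k * X ! k))))"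
    by (intro sum.cong refl) simp
  then show ?thesis by (simp add: ELG_def hK_def)
qed

lemma esi_real:
  fixes g :: "real \<Rightarrow> real"
  assumes P: "P \<in> sets lebesgue" and I: "integrable (lebesgue_on P) g"
  shows "ereal_set_integral P (\<lambda>p. ereal (g p)) = ereal (integral\<^sup>L (lebesgue_on P) g)"
proof -
  have r1: "(\<integral>\<^sup>+ p\<in>P. e2ennreal (ereal (g p)) \<partial>lebesgue) = (\<integral>\<^sup>+ p. ennreal (g p) \<partial>lebesgue_on P)"
    by (simp add: nn_integral_restrict_space P)
  have r2: "(\<integral>\<^sup>+ p\<in>P. e2ennreal (- ereal (g p)) \<partial>lebesgue) = (\<integral>\<^sup>+ p. ennreal (- g p) \<partial>lebesgue_on P)"
    by (simp add: nn_integral_restrict_space P)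
  have fin: "(\<integral>\<^sup>+ p. ennreal (norm (g p)) \<partial>lebesgue_on P) < \<infinity>" using I by (simp add: integrable_iff_bounded)
  have f1: "(\<integral>\<^sup>+ p. ennreal (g p) \<partial>lebesgue_on P) < top"
    by (rule le_less_trans[OF _ fin[unfolded infinity_ennreal_def]]) (intro nn_integral_mono, simp)
  have f2: "(\<integral>\<^sup>+ p. ennreal (- g p) \<partial>lebesgue_on P) < top"
    by (rule le_less_trans[OF _ fin[unfolded infinity_ennreal_def]]) (intro nn_integral_mono, simp)
  show ?thesis
    unfolding ereal_set_integral_def r1 r2 real_lebesgue_integral_def[OF I]
    by (simp add: enn2ereal_fin[OF f1] enn2ereal_fin[OF f2])
qed

lemma fobj_good:
  assumes P: "P \<in> sets lebesgue" "P \<subseteq> {0..1}" and K: "K \<in> admissible n" "good n K"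
  shows "fobj n P K = ereal (V n P K)"
proof -
  have I: "integrable (lebesgue_on P) (hK n K)"
    by (rule intM[OF P]) (unfold hK_def Pp_def, intro continuous_intros)
  show ?thesis
    unfolding fobj_def ELG_good[OF K(2)] esi_real[OF P(1) I] integral_hK[OF P K(1)] ..
qed



lemma sum_minf:
  fixes f :: "'a \<Rightarrow> ereal"
  assumes "finite A" "a \<in> A" "f a = -\<infinity>" "\<And>x. x \<in> A \<Longrightarrow> f x \<noteq> \<infinity>"
  shows "sum f A = -\<infinity>"
proof -
  have "sum f A = f a + sum f (A - {a})" using assms by (simp add: sum.remove)
  moreover have "sum f (A - {a}) \<noteq> \<infinity>" using assms by (auto simp: sum_Pinfty)
  ultimately show ?thesis using assms(3) by (cases "sum f (A - {a})") auto
qed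

lemma elog_ne: "elog x \<noteq> \<infinity>" by (simp add: elog_def)

lemma elog_le2: "x \<le> 2 \<Longrightarrow> elog x \<le> ereal (ln 2)"
  by (auto simp: elog_def)

lemma Pp_nonneg: "p \<in> {0..1} \<Longrightarrow> 0 \<le> Pp n p X" by (simp add: Pp_def)
lemma Pp_le1: "p \<in> {0..1} \<Longrightarrow> Pp n p X \<le> 1" by (simp add: Pp_def mult_le_one power_le_one)
lemma Pp_pos: "p \<in> {0<..<1} \<Longrightarrow> 0 < Pp n p X" by (simp add: Pp_def)

lemma path_val: "X \<in> paths n \<Longrightarrow> k < n \<Longrightarrow> X ! k = 1 \<or> X ! k = -1"
proof -
  assume X: "X \<in> paths n" and k: "k < n"
  have "X ! k \<in> set X" using X k nth_mem[of k X] by (simp add: paths_def)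
  moreover have "set X \<subseteq> {-1,1}" using X by (simp add: paths_def)
  ultimately show ?thesis by blast
qed

lemma ELG_bound:
  assumes K: "K \<in> admissible n" and p: "p \<in> {0..1}"
  shows "ELG n K p \<le> ereal ((1 / real n) * (real (card (paths n)) * (real n * ln 2)))"
proof -
  have t: "ereal (Pp n p X) * (\<Sum>k<n. elog (1 + K X k * X ! k)) \<le> ereal (real n * ln 2)"
    if X: "X \<in> paths n" for X
  proof -
    have "(\<Sum>k<n. elog (1 + K X k * X ! k)) \<le> (\<Sum>k<n. ereal (ln 2))"
    proof (rule sum_mono)
      fix k assume k: "k \<in> {..<n}"
      have "\<forall>X\<in>paths n. \<forall>k<n. \<bar>K X k\<bar> \<le> 1" using K unfolding admissible_def by blast
      then have "\<bar>K X k\<bar> \<le> 1" using X k by blast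
      moreover have "X ! k = 1 \<or> X ! k = -1" using path_val[OF X] k by simp
      ultimately have "1 + K X k * X ! k \<le> 2" by (auto simp: abs_le_iff)
      then show "elog (1 + K X k * X ! k) \<le> ereal (ln 2)" by (rule elog_le2)
    qed
    also have "\<dots> = ereal (real n * ln 2)" by simp
    finally have s: "(\<Sum>k<n. elog (1 + K X k * X ! k)) \<le> ereal (real n * ln 2)" .
    have "ereal (Pp n p X) * (\<Sum>k<n. elog (1 + K X k * X ! k)) \<le> ereal (Pp n p X) * ereal (real n * ln 2)"
      using Pp_nonneg[OF p] by (intro ereal_mult_left_mono[OF s]) simp
    also have "\<dots> = ereal (Pp n p X * (real n * ln 2))" by simp
    also have "\<dots> \<le> ereal (real n * ln 2)"
    proof -
      have "0 \<le> real n * ln 2" by simp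
      then show ?thesis using Pp_le1[OF p, of n X] mult_right_mono[of "Pp n p X" 1 "real n * ln 2"] by simp
    qed
    finally show ?thesis .
  qed
  have "(\<Sum>X\<in>paths n. ereal (Pp n p X) * (\<Sum>k<n. elog (1 + K X k * X ! k)))
        \<le> (\<Sum>X\<in>paths n. ereal (real n * ln 2))"
    using t by (rule sum_mono)
  also have "\<dots> = ereal (real (card (paths n)) * (real n * ln 2))" by simp
  finally have "ereal (1 / real n) * (\<Sum>X\<in>paths n. ereal (Pp n p X) * (\<Sum>k<n. elog (1 + K X k * X ! k)))
       \<le> ereal (1 / real n) * ereal (real (card (paths n)) * (real n * ln 2))"
    by (intro ereal_mult_left_mono) simp_all
  then show ?thesis by (simp add: ELG_def)
qed

lemma ELG_bad:
  assumes K: "K \<in> admissible n" "\<not> good n K" and n: "n \<ge> 1" and p: "p \<in> {0<..<1}"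
  shows "ELG n K p = -\<infinity>"
proof -
  obtain X0 k0 where X0: "X0 \<in> paths n" "k0 < n" "\<not> 0 < 1 + K X0 k0 * X0 ! k0"
    using K(2) unfolding good_def by blast
  have ne: "(\<Sum>k<n. elog (1 + K X k * X ! k)) \<noteq> \<infinity>" for X
    by (simp add: sum_Pinfty elog_ne)
  have s0: "(\<Sum>k<n. elog (1 + K X0 k * X0 ! k)) = -\<infinity>"
    using X0 by (intro sum_minf[where a=k0]) (auto simp: elog_def elog_ne)
  have ne2: "ereal (Pp n p X) * (\<Sum>k<n. elog (1 + K X k * X ! k)) \<noteq> \<infinity>" for X
  proof -
    have "0 < Pp n p X" by (rule Pp_pos[OF p])
    then show ?thesis using ne[of X]
      by (cases "(\<Sum>k<n. elog (1 + K X k * X ! k))") auto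
  qed
  have "(\<Sum>X\<in>paths n. ereal (Pp n p X) * (\<Sum>k<n. elog (1 + K X k * X ! k))) = -\<infinity>"
  proof (rule sum_minf[where a=X0])
    show "finite (paths n)" by (rule finite_paths)
    show "X0 \<in> paths n" by (rule X0)
    show "ereal (Pp n p X0) * (\<Sum>k<n. elog (1 + K X0 k * X0 ! k)) = -\<infinity>"
      using Pp_pos[OF p, of n X0] s0 by simp
  qed (rule ne2)
  then show ?thesis using n by (simp add: ELG_def)
qed

lemma fobj_bad:
  assumes P: "P \<in> sets lebesgue" "P \<subseteq> {0..1}" "emeasure lebesgue P > 0"
    and K: "K \<in> admissible n" "\<not> good n K" and n: "n \<ge> 1"
  shows "fobj n P K = -\<infinity>"
proof -
  define C where "C = (1 / real n) * (real (card (paths n)) * (real n * ln 2))"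
  have pos: "(\<integral>\<^sup>+ p\<in>P. e2ennreal (ELG n K p) \<partial>lebesgue) < top"
  proof -
    have "(\<integral>\<^sup>+ p\<in>P. e2ennreal (ELG n K p) \<partial>lebesgue) \<le> (\<integral>\<^sup>+ p. ennreal C * indicator P p \<partial>lebesgue)"
    proof (rule nn_integral_mono)
      fix p
      show "e2ennreal (ELG n K p) * indicator P p \<le> ennreal C * indicator P p"
      proof (cases "p \<in> P")
        case True
        then have "p \<in> {0..1}" using P(2) by auto
        then have "e2ennreal (ELG n K p) \<le> e2ennreal (ereal C)"
          unfolding C_def by (intro e2ennreal_mono ELG_bound[OF K(1)])
        then show ?thesis using True by simp
      qed simp
    qed
    also have "\<dots> = ennreal C * emeasure lebesgue P"
      using P(1) by (simp add: nn_integral_cmult_indicator)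
    also have "\<dots> < top"
      using finite_P[OF P(1,2)] by (simp add: ennreal_mult_less_top)
    finally show ?thesis .
  qed
  have neg: "(\<integral>\<^sup>+ p\<in>P. e2ennreal (- ELG n K p) \<partial>lebesgue) = top"
  proof -
    have "(\<integral>\<^sup>+ p. top * indicator (P - {0,1}) p \<partial>lebesgue) \<le> (\<integral>\<^sup>+ p\<in>P. e2ennreal (- ELG n K p) \<partial>lebesgue)"
    proof (rule nn_integral_mono)
      fix p
      show "top * indicator (P - {0,1}) p \<le> e2ennreal (- ELG n K p) * indicator P p"
      proof (cases "p \<in> P - {0,1}")
        case True
        then have "p \<in> {0<..<1}" using P(2) by force
        then have "ELG n K p = -\<infinity>" by (rule ELG_bad[OF K n])
        then show ?thesis using True by simp
      qed simp
    qed
    moreover have "(\<integral>\<^sup>+ p. top * indicator (P - {0,1}) p \<partial>lebesgue) = top * emeasure lebesgue (P - {0,1})"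
      using P(1) by (intro nn_integral_cmult_indicator) auto
    moreover have "top * emeasure lebesgue (P - {0,1}) = top"
      using Pprime_pos[OF P(1,3)] by (simp add: ennreal_top_mult)
    ultimately show ?thesis by (simp add: top_unique)
  qed
  show ?thesis unfolding fobj_def ereal_set_integral_def neg
    using enn2ereal_fin[OF pos] by simp
qed



lemma s_bound: "(A::real) > 0 \<Longrightarrow> B > 0 \<Longrightarrow> \<bar>(A - B) / (A + B)\<bar> < 1"
  by (simp add: abs_less_iff field_simps)

lemma Kstar_ext:
  assumes P: "P \<in> sets lebesgue" "P \<subseteq> {0..1}" and Y: "Y \<in> paths k"
  shows "Kstar P (ext n Y) k = (wA P k Y - wB P k Y) / (wA P k Y + wB P k Y)"
  using Kstar_eq[OF P, of "ext n Y" k] take_ext[OF Y] by simp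

lemma Kstar_abs:
  assumes P: "P \<in> sets lebesgue" "P \<subseteq> {0..1}" "emeasure lebesgue P > 0"
  shows "\<bar>Kstar P X k\<bar> < 1"
  unfolding Kstar_eq[OF P(1,2)] by (intro s_bound wA_pos[OF P] wB_pos[OF P])

lemma Kstar_adm:
  assumes P: "P \<in> sets lebesgue" "P \<subseteq> {0..1}" "emeasure lebesgue P > 0"
  shows "Kstar P \<in> admissible n"
  unfolding admissible_def
proof (intro CollectI conjI ballI allI impI)
  fix X Y :: "real list" and k :: nat assume "take k X = take k Y"
  then show "Kstar P X k = Kstar P Y k" by (simp add: Kstar_def)
next
  fix X :: "real list" and k :: nat show "\<bar>Kstar P X k\<bar> \<le> 1" using Kstar_abs[OF P, of X k] by simp
qed

lemma Kstar_good:
  assumes P: "P \<in> sets lebesgue" "P \<subseteq> {0..1}" "emeasure lebesgue P > 0"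
  shows "good n (Kstar P)"
  unfolding good_def
proof (intro ballI allI impI)
  fix X k assume X: "X \<in> paths n" and k: "k < n"
  have "\<bar>Kstar P X k\<bar> < 1" by (rule Kstar_abs[OF P])
  then show "0 < 1 + Kstar P X k * X ! k" using path_val[OF X k] by (auto simp: abs_less_iff)
qed

lemma phi_le:
  assumes P: "P \<in> sets lebesgue" "P \<subseteq> {0..1}" "emeasure lebesgue P > 0"
    and K: "K \<in> admissible n" "good n K" and k: "k < n" and Y: "Y \<in> paths k"
  shows "Phi P k Y (K (ext n Y) k) \<le> Phi P k Y (Kstar P (ext n Y) k)"
    and "Phi P k Y (K (ext n Y) k) = Phi P k Y (Kstar P (ext n Y) k) \<Longrightarrow> K (ext n Y) k = Kstar P (ext n Y) k"
proof -
  define a where "a = K (ext n Y) k"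
  have lY: "length Y = k" using Y by (simp add: paths_def)
  have g: "\<forall>X\<in>paths n. \<forall>k<n. 0 < 1 + K X k * X ! k" using K(2) by (simp add: good_def)
  have e1: "ext n Y \<in> paths n" using ext_paths[OF Y] k by simp
  have "0 < 1 + K (ext n Y) k * ext n Y ! k" using g e1 k by blast
  then have a1: "1 + a > 0" using nth_ext[OF Y k] by (simp add: a_def)
  have Y2: "Y @ [-1] \<in> paths (Suc k)" using Y by (auto simp: paths_def)
  define X' where "X' = ext n (Y @ [-1])"
  have X': "X' \<in> paths n" using ext_paths[OF Y2] k by (simp add: X'_def)
  have tX': "take k X' = Y" using lY by (simp add: X'_def ext_def)
  have nX': "X' ! k = -1" using lY by (simp add: X'_def ext_def nth_append)
  have "K X' k = a" using causal[OF K(1) X' k] tX' by (simp add: a_def)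
  moreover have "0 < 1 + K X' k * X' ! k" using g X' k by blast
  ultimately have a2: "1 - a > 0" using nX' by simp
  have ks: "Kstar P (ext n Y) k = (wA P k Y - wB P k Y) / (wA P k Y + wB P k Y)"
    by (rule Kstar_ext[OF P(1,2) Y])
  note gb = gibbs[OF wA_pos[OF P] wB_pos[OF P] a1 a2, of k Y k Y]
  show "Phi P k Y (K (ext n Y) k) \<le> Phi P k Y (Kstar P (ext n Y) k)"
    using gb(1) unfolding Phi_def ks a_def .
  show "K (ext n Y) k = Kstar P (ext n Y) k"
    if "Phi P k Y (K (ext n Y) k) = Phi P k Y (Kstar P (ext n Y) k)"
    using gb(2) that unfolding Phi_def ks a_def by blast
qed

theorem mainTheorem2:
  fixes n :: nat and P :: "real set"
  assumes "n \<ge> 1"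
    and "P \<in> sets lebesgue"
    and "P \<subseteq> {0..1}"
    and "emeasure lebesgue P > 0"
  shows "Kstar P \<in> admissible n
    \<and> (\<forall>K\<in>admissible n. fobj n P K \<le> fobj n P (Kstar P))
    \<and> (\<forall>K\<in>admissible n. (\<forall>K'\<in>admissible n. fobj n P K' \<le> fobj n P K)
          \<longrightarrow> (\<forall>X\<in>paths n. \<forall>k<n. K X k = Kstar P X k))"
proof -
  note P = assms(2,3,4)
  have adm: "Kstar P \<in> admissible n" by (rule Kstar_adm[OF P])
  have fs: "fobj n P (Kstar P) = ereal (V n P (Kstar P))"
    by (rule fobj_good[OF P(1,2) adm Kstar_good[OF P]])
  have Vle: "V n P K \<le> V n P (Kstar P)" if K: "K \<in> admissible n" "good n K" for K
    unfolding V_def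
    by (intro mult_left_mono sum_mono phi_le(1)[OF P K]) auto
  have le: "fobj n P K \<le> fobj n P (Kstar P)" if K: "K \<in> admissible n" for K
  proof (cases "good n K")
    case True
    then show ?thesis using fobj_good[OF P(1,2) K True] fs Vle[OF K True] by simp
  next
    case False
    then show ?thesis using fobj_bad[OF P K False assms(1)] by simp
  qed
  have uniq: "\<forall>X\<in>paths n. \<forall>k<n. K X k = Kstar P X k"
    if K: "K \<in> admissible n" and mx: "\<forall>K'\<in>admissible n. fobj n P K' \<le> fobj n P K" for K
  proof -
    have ge: "fobj n P (Kstar P) \<le> fobj n P K" using mx adm by blast
    have gd: "good n K"
    proof (rule ccontr)
      assume "\<not> good n K"
      then have "fobj n P K = -\<infinity>" by (rule fobj_bad[OF P K _ assms(1)])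
      then show False using ge fs by simp
    qed
    have fK: "fobj n P K = ereal (V n P K)" by (rule fobj_good[OF P(1,2) K gd])
    have eqV: "V n P K = V n P (Kstar P)" using ge fs fK Vle[OF K gd] by simp
    define d where "d k Y = Phi P k Y (Kstar P (ext n Y) k) - Phi P k Y (K (ext n Y) k)" for k Y
    have dnn: "0 \<le> d k Y" if "k < n" "Y \<in> paths k" for k Y
      using phi_le(1)[OF P K gd that] by (simp add: d_def)
    have "(1 / real n) * (\<Sum>k<n. \<Sum>Y\<in>paths k. d k Y) = V n P (Kstar P) - V n P K"
      unfolding V_def d_def by (simp add: sum_subtractf right_diff_distrib)
    then have "(\<Sum>k<n. \<Sum>Y\<in>paths k. d k Y) = 0" using eqV assms(1) by simp
    then have d0: "\<forall>k\<in>{..<n}. (\<Sum>Y\<in>paths k. d k Y) = 0"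
      using dnn by (subst (asm) sum_nonneg_eq_0_iff) (auto intro!: sum_nonneg)
    have dz: "d k Y = 0" if "k < n" "Y \<in> paths k" for k Y
    proof -
      have "(\<Sum>Y\<in>paths k. d k Y) = 0" using d0 that by blast
      then show ?thesis using dnn that finite_paths[of k] by (subst (asm) sum_nonneg_eq_0_iff) auto
    qed
    show ?thesis
    proof (intro ballI allI impI)
      fix X k assume X: "X \<in> paths n" and k: "k < n"
      define Y where "Y = take k X"
      have Y: "Y \<in> paths k" using take_paths[OF X] k by (simp add: Y_def)
      have "K (ext n Y) k = Kstar P (ext n Y) k"
        using phi_le(2)[OF P K gd k Y] dz[OF k Y] by (simp add: d_def)
      moreover have "K X k = K (ext n Y) k" using causal[OF K X k] by (simp add: Y_def)
      moreover have "Kstar P (ext n Y) k = Kstar P X k"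
        using Kstar_ext[OF P(1,2) Y] Kstar_eq[OF P(1,2), of X k] by (simp add: Y_def)
      ultimately show "K X k = Kstar P X k" by simp
    qed
  qed
  show ?thesis using adm le uniq by blast
qed


end
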